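(* For every $\boldsymbol{\mu}\in\Delta_\mathbb{N}$, letting $X_1,X_2,\dots$ be i.i.d. from $\boldsymbol{\mu}$ and $\widehat{\boldsymbol{\mu}}_m$ the empirical measure of $(X_1,\dots,X_m)$, the quantity $\frac1{\sqrt m}\|\widehat{\boldsymbol{\mu}}_m\|_{1/2}^{1/2}$ converges to $0$ both in $L_1$ and almost surely as $m\to\infty$.
   Context: $\Delta_\mathbb{N}$ is the set of probability distributions on $\mathbb{N}=\{1,2,\dots\}$. $\widehat{\boldsymbol{\mu}}_m(i)=\frac1m\sum_{t=1}^m\mathbb{I}\{X_t=i\}$. $\|\boldsymbol{\mu}\|_{1/2}=(\sum_i\sqrt{\boldsymbol{\mu}(i)})^2$. *)

theory Defs
  imports "HOL-Probability.Probability"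
begin

definition empirical :: "(nat \<Rightarrow> 'a \<Rightarrow> nat) \<Rightarrow> nat \<Rightarrow> 'a \<Rightarrow> nat \<Rightarrow> real" where
  "empirical X m \<omega> i = real (card {t \<in> {1..m}. X t \<omega> = i}) / real m"

definition half_norm :: "(nat \<Rightarrow> real) \<Rightarrow> real" where
  "half_norm p = (\<Sum>\<^sub>\<infinity> i\<in>UNIV. sqrt (p i)) ^ 2"

end

theory Submission
  imports Defs
begin


lemma sqrt_nat_le: "sqrt (real (n::nat)) \<le> real n"
proof (cases "n = 0")
  case False
  then have "real n \<le> real n * real n" by simp
  then have "sqrt (real n) \<le> sqrt (real n * real n)" by (rule real_sqrt_le_mono)
  then show ?thesis by simp
qed simp

lemma card_gt_sum:
  fixes x :: "nat \<Rightarrow> nat"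
  shows "(\<Sum>i\<in>x ` {1..m} \<inter> {K<..}. card {t\<in>{1..m}. x t = i}) = card {t\<in>{1..m}. x t > K}"
proof -
  have "{t\<in>{1..m}. x t > K} = (\<Union>i\<in>x ` {1..m} \<inter> {K<..}. {t\<in>{1..m}. x t = i})" by auto
  moreover have "card (\<Union>i\<in>x ` {1..m} \<inter> {K<..}. {t\<in>{1..m}. x t = i}) = (\<Sum>i\<in>x ` {1..m} \<inter> {K<..}. card {t\<in>{1..m}. x t = i})"
    by (rule card_UN_disjoint) auto
  ultimately show ?thesis by simp
qed

lemma det_bound:
  fixes x :: "nat \<Rightarrow> nat" and m K :: nat
  assumes m: "m > 0"
  shows "sqrt (half_norm (\<lambda>i. real (card {t\<in>{1..m}. x t = i}) / real m)) / sqrt (real m)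
     \<le> real (K+1) / sqrt (real m) + real (card {t\<in>{1..m}. x t > K}) / real m"
proof -
  define N where "N i = card {t\<in>{1..m}. x t = i}" for i
  define f where "f i = sqrt (real (N i) / real m)" for i
  define S where "S = x ` {1..m} \<inter> {K<..}"
  have finS: "finite S" unfolding S_def by simp
  have Nle: "N i \<le> m" for i unfolding N_def
    by (metis (no_types, lifting) card_atLeastAtMost card_mono diff_Suc_1 finite_atLeastAtMost mem_Collect_eq subsetI)
  have f0: "f i = 0" if "i \<notin> {..K} \<union> S" for i
  proof -
    have "{t\<in>{1..m}. x t = i} = {}" using that unfolding S_def by auto
    then show ?thesis unfolding f_def N_def by simp
  qed
  have "infsum f UNIV = infsum f ({..K} \<union> S)"
    by (rule infsum_cong_neutral) (use f0 in auto)
  also have "\<dots> = sum f ({..K} \<union> S)" using finS by simp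
  also have "\<dots> = sum f {..K} + sum f S"
    by (rule sum.union_disjoint) (auto simp: S_def finS)
  finally have eq: "infsum f UNIV = sum f {..K} + sum f S" .
  have fnn: "f i \<ge> 0" for i unfolding f_def by simp
  have hn: "sqrt (half_norm (\<lambda>i. real (N i) / real m)) = sum f {..K} + sum f S"
    unfolding half_norm_def f_def[symmetric] eq
    by (simp add: sum_nonneg fnn)
  have f1: "f i \<le> 1" for i unfolding f_def using Nle[of i] m by simp
  have A: "sum f {..K} \<le> real (K+1)"
    using sum_mono[of "{..K}" f "\<lambda>_. 1"] f1 by simp
  have B: "f i / sqrt (real m) \<le> real (N i) / real m" for i
  proof -
    have "f i / sqrt (real m) = sqrt (real (N i)) / real m"
      unfolding f_def using m by (simp add: real_sqrt_divide field_simps)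
    also have "\<dots> \<le> real (N i) / real m" using sqrt_nat_le[of "N i"] m
      by (simp add: divide_right_mono)
    finally show ?thesis .
  qed
  have "sum f S / sqrt (real m) = (\<Sum>i\<in>S. f i / sqrt (real m))" by (simp add: sum_divide_distrib)
  also have "\<dots> \<le> (\<Sum>i\<in>S. real (N i) / real m)" by (rule sum_mono) (rule B)
  also have "\<dots> = real (card {t\<in>{1..m}. x t > K}) / real m"
    unfolding sum_divide_distrib[symmetric] of_nat_sum[symmetric] S_def N_def card_gt_sum ..
  finally have C: "sum f S / sqrt (real m) \<le> real (card {t\<in>{1..m}. x t > K}) / real m" .
  have "sqrt (half_norm (\<lambda>i. real (N i) / real m)) / sqrt (real m)
     = sum f {..K} / sqrt (real m) + sum f S / sqrt (real m)" unfolding hn by (simp add: add_divide_distrib)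
  also have "\<dots> \<le> real (K+1) / sqrt (real m) + real (card {t\<in>{1..m}. x t > K}) / real m"
    using A C m by (intro add_mono divide_right_mono) auto
  finally show ?thesis unfolding N_def .
qed

lemma empirical_eq: "empirical X m \<omega> = (\<lambda>i. real (card {t\<in>{1..m}. X t \<omega> = i}) / real m)"
  by (rule ext) (simp add: empirical_def)

lemma map_nth_aux:
  fixes X :: "nat \<Rightarrow> 'a \<Rightarrow> nat" and m t :: nat
  assumes t: "t \<in> {1..m}"
  shows "map (\<lambda>j. X (Suc j) \<omega>) [0..<m] ! (t-1) = X t \<omega>"
proof -
  have "t - 1 < m" using t by auto
  then have "map (\<lambda>j. X (Suc j) \<omega>) [0..<m] ! (t-1) = X (Suc (t-1)) \<omega>" by simp
  moreover have "Suc (t-1) = t" using t by auto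
  ultimately show ?thesis by simp
qed

lemma map_nth_set:
  fixes X :: "nat \<Rightarrow> 'a \<Rightarrow> nat" and m :: nat
  shows "{t\<in>{1..m}. map (\<lambda>j. X (Suc j) \<omega>) [0..<m] ! (t-1) = i} = {t\<in>{1..m}. X t \<omega> = i}"
proof (rule Collect_cong)
  fix t show "(t \<in> {1..m} \<and> map (\<lambda>j. X (Suc j) \<omega>) [0..<m] ! (t-1) = i) = (t \<in> {1..m} \<and> X t \<omega> = i)"
    by (metis map_nth_aux)
qed

lemma F_measurable:
  fixes X :: "nat \<Rightarrow> 'a \<Rightarrow> nat"
  assumes Xm: "\<And>t. X (Suc t) \<in> measurable M (count_space UNIV)"
  shows "(\<lambda>\<omega>. sqrt (half_norm (empirical X m \<omega>)) / sqrt (real m)) \<in> borel_measurable M"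
proof -
  define L where "L \<omega> = map (\<lambda>j. X (Suc j) \<omega>) [0..<m]" for \<omega>
  define G where "G xs = sqrt (half_norm (\<lambda>i. real (card {t\<in>{1..m}. (xs::nat list) ! (t-1) = i}) / real m)) / sqrt (real m)" for xs
  have Lm: "L \<in> measurable M (count_space UNIV)"
    unfolding measurable_count_space_eq2_countable
  proof (intro conjI ballI)
    show "L \<in> space M \<rightarrow> UNIV" by simp
    fix xs :: "nat list"
    have Ll: "length (L \<omega>) = m" for \<omega> by (simp add: L_def)
    have Ln: "j < m \<Longrightarrow> L \<omega> ! j = X (Suc j) \<omega>" for j \<omega> by (simp add: L_def)
    have Leq: "L \<omega> = xs \<longleftrightarrow> length xs = m \<and> (\<forall>j<m. X (Suc j) \<omega> = xs ! j)" for \<omega>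
      unfolding list_eq_iff_nth_eq Ll using Ln by auto
    have e1: "L -` {xs} \<inter> space M = {\<omega>\<in>space M. length xs = m \<and> (\<forall>j<m. X (Suc j) \<omega> = xs ! j)}"
      using Leq by blast
    have e2: "{\<omega>\<in>space M. \<forall>j<m. X (Suc j) \<omega> = xs ! j} \<in> sets M"
      using Xm by measurable
    show "L -` {xs} \<inter> space M \<in> sets M"
    proof (cases "length xs = m")
      case True
      then have "L -` {xs} \<inter> space M = {\<omega>\<in>space M. \<forall>j<m. X (Suc j) \<omega> = xs ! j}"
        unfolding e1 by simp
      then show ?thesis using e2 by (simp only:)
    next
      case False
      then have "L -` {xs} \<inter> space M = {}"
        unfolding e1 by simp
      then show ?thesis by (simp only: sets.empty_sets)
    qed
  qed
  have eq: "sqrt (half_norm (empirical X m \<omega>)) / sqrt (real m) = G (L \<omega>)" for \<omega>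
    unfolding G_def empirical_eq L_def map_nth_set ..
  show ?thesis unfolding eq
    by (rule measurable_compose[OF Lm]) simp
qed

lemma F_bounds:
  fixes X :: "nat \<Rightarrow> 'a \<Rightarrow> nat"
  shows "0 \<le> sqrt (half_norm (empirical X m \<omega>)) / sqrt (real m)"
    and "sqrt (half_norm (empirical X m \<omega>)) / sqrt (real m) \<le> 2"
proof -
  show "0 \<le> sqrt (half_norm (empirical X m \<omega>)) / sqrt (real m)" unfolding half_norm_def by simp
  show "sqrt (half_norm (empirical X m \<omega>)) / sqrt (real m) \<le> 2"
  proof (cases "m = 0")
    case True then show ?thesis by simp
  next
    case False
    then have m: "m > 0" by simp
    have "sqrt (half_norm (empirical X m \<omega>)) / sqrt (real m) \<le>
        real (0+1) / sqrt (real m) + real (card {t\<in>{1..m}. (\<lambda>t. X t \<omega>) t > 0}) / real m"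
      unfolding empirical_eq using det_bound[OF m, of "\<lambda>t. X t \<omega>" 0] by simp
    moreover have "real (0+1) / sqrt (real m) \<le> 1" using m by simp
    moreover have "card {t\<in>{1..m}. (\<lambda>t. X t \<omega>) t > 0} \<le> m"
      by (metis (no_types, lifting) card_atLeastAtMost card_mono diff_Suc_1 finite_atLeastAtMost mem_Collect_eq subsetI)
    then have "real (card {t\<in>{1..m}. (\<lambda>t. X t \<omega>) t > 0}) / real m \<le> 1" using m by simp
    ultimately show ?thesis by linarith
  qed
qed




lemma tail_AE:
  fixes M :: "'a measure" and q :: "nat pmf" and X :: "nat \<Rightarrow> 'a \<Rightarrow> nat" and K :: nat and e :: real
  assumes P: "prob_space M"
    and ind: "prob_space.indep_vars M (\<lambda>_. count_space UNIV) X {1..}"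
    and dis: "\<And>t. t \<ge> 1 \<Longrightarrow> distr M (count_space UNIV) (X t) = measure_pmf q"
    and e: "e > 0"
  shows "AE \<omega> in M. eventually (\<lambda>m. real (card {t\<in>{1..m}. X t \<omega> > K}) / real m
      < prob_space.expectation M (\<lambda>\<omega>. of_bool (K < X 1 \<omega>) :: real) + e) sequentially"
proof -
  interpret prob_space M by fact
  define Y where "Y t \<omega> = (of_bool (K < X t \<omega>) :: real)" for t \<omega>
  define p where "p = expectation (Y 1)"
  have Yeq: "Y s = (\<lambda>\<omega>. of_bool (K < X s \<omega>))" for s by (rule ext) (simp add: Y_def)
  have Xm: "X t \<in> measurable M (count_space UNIV)" if "t \<ge> 1" for t
    using ind that unfolding indep_vars_def by auto
  have Ym: "Y t \<in> borel_measurable M" if "t \<ge> 1" for t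
    unfolding Y_def by (rule measurable_compose[OF Xm[OF that]]) simp
  have indY: "indep_vars (\<lambda>_. borel) Y {1..}"
    unfolding Y_def by (rule indep_vars_compose2[OF ind]) simp
  have disY: "distr M borel (Y t) = distr M borel (Y 1)" if "t \<ge> 1" for t
  proof -
    have "distr M borel (Y s) = distr (measure_pmf q) borel (\<lambda>i. of_bool (K < i) :: real)" if "s \<ge> 1" for s
    proof -
      have "distr M borel (Y s) = distr (distr M (count_space UNIV) (X s)) borel (\<lambda>i. of_bool (K < i) :: real)"
        by (subst distr_distr) (auto simp: Xm[OF that] comp_def Yeq)
      then show ?thesis using dis[OF that] by simp
    qed
    then show ?thesis using that by simp
  qed
  have hoeff: "prob {\<omega>\<in>space M. (\<Sum>t\<in>{1..m}. Y t \<omega>) / real m \<ge> p + e} \<le> exp (-2 * e\<^sup>2) ^ m" for m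
  proof (cases "m = 0")
    case True then show ?thesis by simp
  next
    case False
    have H: "Hoeffding_ineq_iid M {1..m} Y (Y 1) 0 1"
      unfolding Hoeffding_ineq_iid_def iid_interval_bounded_random_variables_def
        iid_interval_bounded_random_variables_axioms_def
    proof (intro conjI)
      show "prob_space M" by fact
      show "finite {1..m}" by simp
      show "indep_vars (\<lambda>_. borel) Y {1..m}" by (rule indep_vars_subset[OF indY]) auto
      show "\<forall>i. i \<in> {1..m} \<longrightarrow> distr M borel (Y i) = distr M borel (Y 1)"
      proof (intro allI impI)
        fix i assume "i \<in> {1..m}"
        then have "i \<ge> 1" by simp
        then show "distr M borel (Y i) = distr M borel (Y 1)" by (rule disY)
      qed
      show "random_variable borel (Y 1)" by (rule Ym) simp
      show "AE x in M. Y 1 x \<in> {0..1}" by (intro AE_I2) (simp add: Y_def)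
    qed
    have "prob {\<omega>\<in>space M. (\<Sum>t\<in>{1..m}. Y t \<omega>) / real (card {1..m}) \<ge> p + e}
        \<le> exp (-2 * real (card {1..m}) * e\<^sup>2 / (1 - 0)\<^sup>2)"
      unfolding p_def using Hoeffding_ineq_iid.Hoeffding_ineq_ge'[OF H, of e] e False by simp
    also have "exp (-2 * real (card {1..m}) * e\<^sup>2 / (1 - 0)\<^sup>2) = exp (-2 * e\<^sup>2) ^ m"
      by (simp add: exp_of_nat_mult[symmetric] mult_ac)
    finally show ?thesis by simp
  qed
  define A where "A m = {\<omega>\<in>space M. (\<Sum>t\<in>{1..m}. Y t \<omega>) / real m \<ge> p + e}" for m
  have Asets: "A m \<in> sets M" for m
  proof -
    have S: "(\<lambda>\<omega>. \<Sum>t\<in>{1..m}. Y t \<omega>) \<in> borel_measurable M"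
      by (rule borel_measurable_sum) (use Ym in auto)
    show ?thesis unfolding A_def using S by measurable
  qed
  have ex1: "exp (-2 * e\<^sup>2) < 1" using e by simp
  have sm: "summable (\<lambda>m. measure M (A m))"
  proof (rule summable_comparison_test)
    show "\<exists>N. \<forall>n\<ge>N. norm (measure M (A n)) \<le> exp (-2 * e\<^sup>2) ^ n"
      using hoeff unfolding A_def by simp
    show "summable (\<lambda>n. exp (-2 * e\<^sup>2) ^ n)"
      by (rule summable_geometric) (use ex1 in simp)
  qed
  have BC: "AE \<omega> in M. eventually (\<lambda>m. \<omega> \<in> space M - A m) sequentially"
    by (rule borel_cantelli_AE1[OF Asets]) (auto simp: sm less_top[symmetric])
  have sumY: "(\<Sum>t\<in>{1..m}. Y t \<omega>) = real (card {t\<in>{1..m}. K < X t \<omega>})" for m \<omega>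
    unfolding Y_def by (simp add: Int_def)
  have pe: "p = expectation (\<lambda>\<omega>. of_bool (K < X 1 \<omega>))" unfolding p_def Yeq ..
  show ?thesis
    using BC
  proof eventually_elim
    fix \<omega> assume "\<forall>\<^sub>F m in sequentially. \<omega> \<in> space M - A m"
    then show "\<forall>\<^sub>F m in sequentially. real (card {t\<in>{1..m}. X t \<omega> > K}) / real m
      < expectation (\<lambda>\<omega>. of_bool (K < X 1 \<omega>)) + e"
    proof (rule eventually_mono)
      fix m assume "\<omega> \<in> space M - A m"
      then have "\<not> (p + e \<le> (\<Sum>t\<in>{1..m}. Y t \<omega>) / real m)" unfolding A_def by auto
      then show "real (card {t\<in>{1..m}. X t \<omega> > K}) / real m
        < expectation (\<lambda>\<omega>. of_bool (K < X 1 \<omega>)) + e"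
        unfolding sumY pe by simp
    qed
  qed
qed


lemma pK_lim:
  fixes M :: "'a measure" and Z :: "'a \<Rightarrow> nat"
  assumes P: "prob_space M" and Zm: "Z \<in> measurable M (count_space UNIV)"
  shows "(\<lambda>K. prob_space.expectation M (\<lambda>\<omega>. of_bool (K < Z \<omega>) :: real)) \<longlonglongrightarrow> 0"
proof -
  interpret prob_space M by fact
  have "(\<lambda>K. integral\<^sup>L M (\<lambda>\<omega>. of_bool (K < Z \<omega>) :: real)) \<longlonglongrightarrow> integral\<^sup>L M (\<lambda>_. 0::real)"
  proof (rule integral_dominated_convergence[where w="\<lambda>_. 1"])
    show "(\<lambda>_. 0::real) \<in> borel_measurable M" by simp
    show "(\<lambda>\<omega>. of_bool (K < Z \<omega>) :: real) \<in> borel_measurable M" for K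
      by (rule measurable_compose[OF Zm]) simp
    show "integrable M (\<lambda>_. 1::real)" by simp
    show "AE x in M. (\<lambda>K. of_bool (K < Z x) :: real) \<longlonglongrightarrow> 0"
    proof (rule AE_I2)
      fix x
      have "eventually (\<lambda>K. (of_bool (K < Z x) :: real) = 0) sequentially"
        unfolding eventually_sequentially by (rule exI[of _ "Z x"]) simp
      then show "(\<lambda>K. of_bool (K < Z x) :: real) \<longlonglongrightarrow> 0" by (rule tendsto_eventually)
    qed
    show "AE x in M. norm (of_bool (K < Z x) :: real) \<le> 1" for K by (rule AE_I2) simp
  qed
  then show ?thesis by simp
qed

lemma sqrt_lim: "(\<lambda>m. c / sqrt (real m)) \<longlonglongrightarrow> 0"
  by (rule tendsto_divide_0[OF tendsto_const filterlim_at_top_imp_at_infinity[OF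
        filterlim_compose[OF sqrt_at_top filterlim_real_sequentially]]])

theorem proposition1:
  fixes M :: "'a measure" and \<mu> :: "nat pmf" and X :: "nat \<Rightarrow> 'a \<Rightarrow> nat"
  assumes "prob_space M"
    and "prob_space.indep_vars M (\<lambda>_. count_space UNIV) X {1..}"
    and "\<And>t. t \<ge> 1 \<Longrightarrow> distr M (count_space UNIV) (X t) = measure_pmf \<mu>"
  shows "(\<forall>m. integrable M (\<lambda>\<omega>. sqrt (half_norm (empirical X m \<omega>)) / sqrt (real m)))
     \<and> (\<lambda>m. \<integral>\<omega>. \<bar>sqrt (half_norm (empirical X m \<omega>)) / sqrt (real m)\<bar> \<partial>M) \<longlonglongrightarrow> 0
     \<and> (AE \<omega> in M. (\<lambda>m. sqrt (half_norm (empirical X m \<omega>)) / sqrt (real m)) \<longlonglongrightarrow> 0)"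
proof -
  interpret prob_space M by fact
  have Xm: "X t \<in> measurable M (count_space UNIV)" if "t \<ge> 1" for t
    using assms(2) that unfolding indep_vars_def by auto
  have Fm: "(\<lambda>\<omega>. sqrt (half_norm (empirical X m \<omega>)) / sqrt (real m)) \<in> borel_measurable M" for m
    by (rule F_measurable) (rule Xm, simp)
  have int: "integrable M (\<lambda>\<omega>. sqrt (half_norm (empirical X m \<omega>)) / sqrt (real m))" for m
  proof (rule integrable_const_bound[where B=2])
    show "AE x in M. norm (sqrt (half_norm (empirical X m x)) / sqrt (real m)) \<le> 2"
      by (rule AE_I2) (metis F_bounds(1) F_bounds(2) abs_abs abs_of_nonneg real_norm_def)
  qed (rule Fm)
  define p where "p K = expectation (\<lambda>\<omega>. of_bool (K < X 1 \<omega>) :: real)" for K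
  have plim: "p \<longlonglongrightarrow> 0" unfolding p_def by (rule pK_lim[OF assms(1) Xm]) simp
  have tails: "AE \<omega> in M. \<forall>K. \<forall>n. eventually (\<lambda>m. real (card {t\<in>{1..m}. X t \<omega> > K}) / real m
      < p K + inverse (real (Suc n))) sequentially"
    unfolding AE_all_countable p_def
    by (intro allI tail_AE[OF assms(1) assms(2) assms(3)]) simp_all
  have ae: "AE \<omega> in M. (\<lambda>m. sqrt (half_norm (empirical X m \<omega>)) / sqrt (real m)) \<longlonglongrightarrow> 0"
    using tails
  proof eventually_elim
    fix \<omega> assume H: "\<forall>K n. eventually (\<lambda>m. real (card {t\<in>{1..m}. X t \<omega> > K}) / real m
      < p K + inverse (real (Suc n))) sequentially"
    show "(\<lambda>m. sqrt (half_norm (empirical X m \<omega>)) / sqrt (real m)) \<longlonglongrightarrow> 0"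
    proof (rule tendstoI)
      fix \<epsilon> :: real assume \<epsilon>: "\<epsilon> > 0"
      have "eventually (\<lambda>K. p K < \<epsilon>/3) sequentially"
        using order_tendstoD(2)[OF plim, of "\<epsilon>/3"] \<epsilon> by simp
      then obtain K where pK: "p K < \<epsilon>/3" unfolding eventually_sequentially by auto
      obtain n where n: "inverse (real (Suc n)) < \<epsilon>/3" using reals_Archimedean[of "\<epsilon>/3"] \<epsilon> by auto
      have e1: "eventually (\<lambda>m. real (K+1) / sqrt (real m) < \<epsilon>/3) sequentially"
        using order_tendstoD(2)[OF sqrt_lim[of "real (K+1)"], of "\<epsilon>/3"] \<epsilon> by simp
      have e2: "eventually (\<lambda>m. real (card {t\<in>{1..m}. X t \<omega> > K}) / real m
          < p K + inverse (real (Suc n))) sequentially" using H by blast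
      have e3: "eventually (\<lambda>m. m > (0::nat)) sequentially" by (rule eventually_gt_at_top)
      show "eventually (\<lambda>m. dist (sqrt (half_norm (empirical X m \<omega>)) / sqrt (real m)) 0 < \<epsilon>) sequentially"
        using e1 e2 e3
      proof eventually_elim
        case (elim m)
        have b: "sqrt (half_norm (empirical X m \<omega>)) / sqrt (real m)
          \<le> real (K+1) / sqrt (real m) + real (card {t\<in>{1..m}. X t \<omega> > K}) / real m"
          unfolding empirical_eq using det_bound[OF elim(3), of "\<lambda>t. X t \<omega>" K] by simp
        have "0 \<le> sqrt (half_norm (empirical X m \<omega>)) / sqrt (real m)" by (rule F_bounds)
        then have "dist (sqrt (half_norm (empirical X m \<omega>)) / sqrt (real m)) 0 = sqrt (half_norm (empirical X m \<omega>)) / sqrt (real m)"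
          by (simp only: dist_real_def diff_zero abs_of_nonneg)
        then show ?case using b elim(1) elim(2) pK n by linarith
      qed
    qed
  qed
  have l1: "(\<lambda>m. \<integral>\<omega>. \<bar>sqrt (half_norm (empirical X m \<omega>)) / sqrt (real m)\<bar> \<partial>M) \<longlonglongrightarrow> integral\<^sup>L M (\<lambda>_. 0::real)"
  proof (rule integral_dominated_convergence[where w="\<lambda>_. 2"])
    show "(\<lambda>_. 0::real) \<in> borel_measurable M" by simp
    show "(\<lambda>\<omega>. \<bar>sqrt (half_norm (empirical X m \<omega>)) / sqrt (real m)\<bar>) \<in> borel_measurable M" for m
      using Fm[of m] by measurable
    show "integrable M (\<lambda>_. 2::real)" by simp
    show "AE x in M. (\<lambda>m. \<bar>sqrt (half_norm (empirical X m x)) / sqrt (real m)\<bar>) \<longlonglongrightarrow> 0"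
      using ae by eventually_elim (rule tendsto_rabs_zero)
    show "AE x in M. norm \<bar>sqrt (half_norm (empirical X m x)) / sqrt (real m)\<bar> \<le> 2" for m
      by (rule AE_I2) (metis F_bounds(1) F_bounds(2) abs_abs abs_of_nonneg real_norm_def)
  qed
  show ?thesis using int l1 ae by simp
qed

end
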